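(* For the weighted linear tensor product problem $S_{\boldsymbol\gamma}=\{S_{d,\boldsymbol\gamma}\}$ described in the context, exponential uniform weak tractability (EXP-UWT) holds if and only if $$\lim_{j\to\infty}\frac{\ln\big(\ln\frac1{\lambda_j}\big)}{\ln(\ln j)}=\infty\quad\text{and}\quad \lim_{j\to\infty}\frac{\ln\big(\ln\frac1{\gamma_j}\big)}{\ln j}=\infty.$$
   Context: Let $H_1$ be a separable infinite-dimensional Hilbert space, $G_1$ a Hilbert space and $S_1:H_1\to G_1$ a compact linear operator. Let $\{(\lambda_j,e_j)\}_{j\in\mathbb N}$ be the eigenpairs of $W_1=S_1^*S_1$, with $\{e_j\}$ an orthonormal basis of $H_1$ and $\lambda_1\ge\lambda_2\ge\cdots\ge0$; assume $\lambda_1=1$, $\lambda_2>0$, and $\lambda_j\to0$. (If $\lambda_j=0$ we set $\ln\frac1{\lambda_j}=\infty$.) Let the weights satisfy $1\ge\gamma_1\ge\gamma_2\ge\cdots>0$. For $\gamma\in(0,1]$ let $H_{1,\gamma}$ be $H_1$ with inner product $\langle f,g\rangle_{H_{1,\gamma}}=\langle f_0,g_0\rangle_{H_1}+\gamma^{-1}\langle f_1,g_1\rangle_{H_1}$, where $f_0$ is the orthogonal projection of $f$ onto $\mathrm{span}\{e_1\}$ and $f_1=f-f_0$. For $d\in\mathbb N$ let $S_{d,\boldsymbol\gamma}=S_1\otimes\cdots\otimes S_1$ act from $H_{d,\boldsymbol\gamma}=H_{1,\gamma_1}\otimes\cdots\otimes H_{1,\gamma_d}$ to $G_d=G_1^{\otimes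 d}$. In the worst case setting with algorithms using $n$ arbitrary (possibly adaptive) continuous linear functionals, the information complexity $n(\varepsilon,S_{d,\boldsymbol\gamma})$ (minimal $n$ with $n$-th minimal worst case error $\le\varepsilon$; initial error is $1$) equals $\big|\{\mathbf j\in\mathbb N^d:\prod_{k=1}^d\lambda_{k,j_k}>\varepsilon^2\}\big|$, where $\lambda_{k,1}=1$ and $\lambda_{k,j}=\gamma_k\lambda_j$ for $j\ge2$. For $s,t>0$, EXP-$(s,t)$-WT means $\lim_{d+\varepsilon^{-1}\to\infty}\frac{\ln n(\varepsilon,S_{d,\boldsymbol\gamma})}{d^t+(\ln\varepsilon^{-1})^s}=0$ (over $d\in\mathbb N$, $\varepsilon\in(0,1)$); EXP-UWT means EXP-$(s,t)$-WT holds for all $s>0$ and $t>0$. *)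

theory Defs
  imports "HOL-Analysis.Analysis" "HOL-Library.FuncSet"
begin

text \<open>Sequences are indexed from 1: lam 1, lam 2, ... and gam 1, gam 2, ...;
  the values at index 0 are irrelevant.\<close>

text \<open>Univariate eigenvalues of the k-th weighted factor:
  lambda_{k,1} = 1, lambda_{k,j} = gamma_k * lambda_j for j >= 2.\<close>
definition wlam :: "(nat \<Rightarrow> real) \<Rightarrow> (nat \<Rightarrow> real) \<Rightarrow> nat \<Rightarrow> nat \<Rightarrow> real" where
  "wlam lam gam k j = (if j = 1 then 1 else gam k * lam j)"

definition info_compl :: "(nat \<Rightarrow> real) \<Rightarrow> (nat \<Rightarrow> real) \<Rightarrow> nat \<Rightarrow> real \<Rightarrow> nat" where
  "info_compl lam gam d eps =
     card {j \<in> {1..d} \<rightarrow>\<^sub>E {1..}. (\<Prod>k\<in>{1..d}. wlam lam gam k (j k)) > eps\<^sup>2}"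

definition EXP_WT :: "(nat \<Rightarrow> real) \<Rightarrow> (nat \<Rightarrow> real) \<Rightarrow> real \<Rightarrow> real \<Rightarrow> bool" where
  "EXP_WT lam gam s t \<longleftrightarrow>
     (\<forall>\<eta>>0. \<exists>R. \<forall>d eps. d \<ge> 1 \<longrightarrow> 0 < eps \<longrightarrow> eps < 1 \<longrightarrow> real d + 1 / eps > R \<longrightarrow>
        \<bar>ln (real (info_compl lam gam d eps)) / (real d powr t + ln (1 / eps) powr s)\<bar> < \<eta>)"

definition EXP_UWT :: "(nat \<Rightarrow> real) \<Rightarrow> (nat \<Rightarrow> real) \<Rightarrow> bool" where
  "EXP_UWT lam gam \<longleftrightarrow> (\<forall>s>0. \<forall>t>0. EXP_WT lam gam s t)"

text \<open>ln(ln(1/lambda_j)) / ln(ln j) as an extended real; if lambda_j = 0 then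
  ln(1/lambda_j) = \<infinity> and the quotient is taken to be \<infinity>.\<close>
definition lam_ratio :: "(nat \<Rightarrow> real) \<Rightarrow> nat \<Rightarrow> ereal" where
  "lam_ratio lam j = (if lam j = 0 then \<infinity> else ereal (ln (ln (1 / lam j)) / ln (ln (real j))))"

end

theory Submission
  imports Defs
begin

lemma prod_factor_gt:
  fixes f :: "'a \<Rightarrow> real"
  assumes "finite I" "\<And>k. k \<in> I \<Longrightarrow> 0 \<le> f k \<and> f k \<le> 1" "c < prod f I" "k \<in> I"
  shows "c < f k"
proof -
  have "prod f I = f k * prod f (I - {k})" using assms(1,4) by (simp add: prod.remove)
  moreover have "prod f (I - {k}) \<le> 1" "0 \<le> prod f (I - {k})"
    using assms(2) by (auto intro!: prod_le_1 prod_nonneg)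
  moreover have "0 \<le> f k" using assms by auto
  ultimately have "prod f I \<le> f k" by (metis mult_left_le)
  thus ?thesis using assms(3) by linarith
qed

lemma prodbound:
  fixes a b u :: real assumes "a \<ge> 0" "b \<ge> 0" "u \<ge> 0"
  shows "(a+u)*(b+u) \<le> (a+1)*(b+1)*(1+u*u)"
proof (cases "u \<le> 1")
  case True
  have "(a+u)*(b+u) \<le> (a+1)*(b+1)" using True assms by (intro mult_mono) auto
  also have "\<dots> = (a+1)*(b+1)*1" by simp
  also have "\<dots> \<le> (a+1)*(b+1)*(1+u*u)" using assms by (intro mult_left_mono) auto
  finally show ?thesis .
next
  case False
  have "(a+u)*(b+u) \<le> ((a+1)*u)*((b+1)*u)" using False assms by (intro mult_mono) (auto simp: algebra_simps intro: mult_le_cancel_left1[THEN iffD2])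
  also have "\<dots> = (a+1)*(b+1)*(u*u)" by (simp add: algebra_simps)
  also have "\<dots> \<le> (a+1)*(b+1)*(1+u*u)" using assms by (intro mult_left_mono) auto
  finally show ?thesis .
qed

locale setting =
  fixes lam gam :: "nat \<Rightarrow> real"
  assumes lam1: "lam 1 = 1"
    and lam_nonneg: "\<And>j. j \<ge> 1 \<Longrightarrow> lam j \<ge> 0"
    and lam_mono: "\<And>i j. 1 \<le> i \<Longrightarrow> i \<le> j \<Longrightarrow> lam j \<le> lam i"
    and gam1: "gam 1 \<le> 1"
    and gam_pos: "\<And>j. j \<ge> 1 \<Longrightarrow> gam j > 0"
    and gam_mono: "\<And>i j. 1 \<le> i \<Longrightarrow> i \<le> j \<Longrightarrow> gam j \<le> gam i"
begin

lemma lam_le1: "j \<ge> 1 \<Longrightarrow> lam j \<le> 1"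
  using lam_mono[of 1 j] lam1 by simp

lemma gam_le1: "j \<ge> 1 \<Longrightarrow> gam j \<le> 1"
  using gam_mono[of 1 j] gam1 by simp

lemma wlam_bounds: "k \<ge> 1 \<Longrightarrow> j \<ge> 1 \<Longrightarrow> 0 \<le> wlam lam gam k j \<and> wlam lam gam k j \<le> 1"
  unfolding wlam_def using lam_le1[of j] gam_le1[of k] lam_nonneg[of j] gam_pos[of k]
  by (auto intro: mult_le_one)

definition Aset where "Aset d eps = {j \<in> {1..d} \<rightarrow>\<^sub>E {1..}. (\<Prod>k\<in>{1..d}. wlam lam gam k (j k)) > eps\<^sup>2}"

lemma info_Aset: "info_compl lam gam d eps = card (Aset d eps)"
  unfolding info_compl_def Aset_def by simp

lemma Aset_factor:
  assumes "j \<in> Aset d c" "k \<in> {1..d}"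
  shows "c\<^sup>2 < wlam lam gam k (j k)"
proof -
  have "\<forall>k\<in>{1..d}. j k \<ge> 1" using assms(1) unfolding Aset_def by (auto simp: PiE_iff)
  thus ?thesis
    using assms prod_factor_gt[of "{1..d}" "\<lambda>k. wlam lam gam k (j k)" "c\<^sup>2" k] wlam_bounds
    unfolding Aset_def by auto
qed

lemma Aset_sub:
  assumes "0 \<le> c" "c < 1" "\<And>k. k \<ge> 1 \<Longrightarrow> k \<le> d \<Longrightarrow> gam k > c \<Longrightarrow> k \<le> M"
     "\<And>j. j \<ge> 1 \<Longrightarrow> lam j > c \<Longrightarrow> j \<le> N"
  shows "Aset d (sqrt c) \<subseteq> PiE {1..d} (\<lambda>k. if k \<le> M then {1..N} else {1})"
proof
  fix j assume j: "j \<in> Aset d (sqrt c)"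
  have N1: "N \<ge> 1" using assms(4)[of 1] lam1 assms(2) by simp
  have ext: "j \<in> extensional {1..d}" and ge: "\<And>k. k \<in> {1..d} \<Longrightarrow> j k \<ge> 1"
    using j unfolding Aset_def by (auto simp: PiE_iff)
  have "j k \<in> (if k \<le> M then {1..N} else {1})" if k: "k \<in> {1..d}" for k
  proof (cases "j k = 1")
    case True thus ?thesis using N1 by auto
  next
    case False
    have f: "c < gam k * lam (j k)" using Aset_factor[OF j k] assms(1) False unfolding wlam_def by simp
    have k1: "k \<ge> 1" "j k \<ge> 1" using k ge by auto
    have "gam k * lam (j k) \<le> gam k" using lam_le1[OF k1(2)] gam_pos[OF k1(1)] by (simp add: mult_left_le)
    hence "gam k > c" using f by linarith
    hence "k \<le> M" using assms(3) k1 k by auto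
    moreover have "gam k * lam (j k) \<le> lam (j k)" using gam_le1[OF k1(1)] lam_nonneg[OF k1(2)] gam_pos[OF k1(1)] by (simp add: mult_left_le_one_le)
    hence "lam (j k) > c" using f by linarith
    hence "j k \<le> N" using assms(4) k1 by auto
    ultimately show ?thesis using k1 by auto
  qed
  thus "j \<in> PiE {1..d} (\<lambda>k. if k \<le> M then {1..N} else {1})" using ext by (auto simp: PiE_iff)
qed

lemma card_bound_PiE: assumes N1: "N \<ge> 1" shows "card (PiE {1..d} (\<lambda>k. if k \<le> M then {1..N} else {1::nat})) \<le> N ^ M"
proof -
  have "card (PiE {1..d} (\<lambda>k. if k \<le> M then {1..N} else {1::nat})) = (\<Prod>k\<in>{1..d}. if k \<le> M then N else 1)"
    unfolding card_PiE[OF finite_atLeastAtMost] by (intro prod.cong) auto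
  also have "\<dots> = N ^ card ({1..d} \<inter> {k. k \<le> M})"
    by (simp add: prod.If_cases)
  also have "\<dots> \<le> N ^ M" if "N \<ge> 1"
  proof (cases "N = 0")
    case True thus ?thesis using that by simp
  next
    case False
    have "{1..d} \<inter> {k. k \<le> M} \<subseteq> {1..M}" by auto
    hence "card ({1..d} \<inter> {k. k \<le> M}) \<le> M" using card_mono[of "{1..M}"] by fastforce
    thus ?thesis using False by (simp add: power_increasing)
  qed
  finally show ?thesis using N1 by simp
qed


lemma Aset_finite:
  assumes lim: "lam \<longlonglongrightarrow> 0" and eps: "0 < eps" "eps < 1"
  shows "finite (Aset d eps)"
proof -
  have "eventually (\<lambda>j. lam j < eps\<^sup>2) sequentially"
    using lim eps by (intro order_tendstoD) auto
  then obtain N where N: "\<And>j. j \<ge> N \<Longrightarrow> lam j < eps\<^sup>2" by (auto simp: eventually_sequentially)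
  have "Aset d (sqrt (eps\<^sup>2)) \<subseteq> PiE {1..d} (\<lambda>k. if k \<le> d then {1..N} else {1})"
  proof (intro Aset_sub)
    fix j assume "eps\<^sup>2 < lam j"
    thus "j \<le> N" using N[of j] by (cases "j \<ge> N") auto
  qed (use eps in \<open>auto simp: power_less_one_iff\<close>)
  moreover have "finite (PiE {1..d} (\<lambda>k. if k \<le> d then {1..N} else {1::nat}))"
    by (intro finite_PiE) auto
  ultimately show ?thesis using eps by (simp add: finite_subset)
qed

lemma Aset_ne:
  assumes "eps\<^sup>2 < 1"
  shows "(\<lambda>k\<in>{1..d}. 1) \<in> Aset d eps"
proof -
  have "(\<Prod>k\<in>{1..d}. wlam lam gam k ((\<lambda>k\<in>{1..d}. 1) k)) = 1"
    by (intro prod.neutral) (auto simp: wlam_def)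
  thus ?thesis using assms unfolding Aset_def by auto
qed

lemma card_Aset_ge1:
  assumes lim: "lam \<longlonglongrightarrow> 0" and eps: "0 < eps" "eps < 1"
  shows "card (Aset d eps) \<ge> 1"
proof -
  have "eps\<^sup>2 < 1" using eps by (simp add: power_less_one_iff)
  thus ?thesis using Aset_ne[of eps d] Aset_finite[OF assms]
    by (metis One_nat_def Suc_leI card_gt_0_iff empty_iff)
qed


lemma gam_bound:
  assumes B: "B > 0" and j0: "\<And>j. j \<ge> j0 \<Longrightarrow> B \<le> ln (ln (1 / gam j)) / ln (real j)" "j0 \<ge> 2"
    and k: "k \<ge> 1" and g: "gam k > exp (- x)"
  shows "real k \<le> real j0 + x powr (1/B)"
proof (cases "k < j0")
  case True
  have "x powr (1/B) \<ge> 0" by simp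
  thus ?thesis using True by linarith
next
  case False
  hence kj: "k \<ge> j0" by simp
  have lnk: "ln (real k) > 0" using kj j0(2) by simp
  have h: "B * ln (real k) \<le> ln (ln (1 / gam k))" using j0(1)[OF kj] lnk by (simp add: pos_le_divide_eq)
  have pos: "B * ln (real k) > 0" using B lnk by simp
  define L where "L = ln (1 / gam k)"
  have gk: "0 < gam k" "gam k \<le> 1" using gam_pos[OF k] gam_le1[OF k] by auto
  have L0: "L \<ge> 0" unfolding L_def using gk by simp
  have L1: "L > 1"
  proof (rule ccontr)
    assume "\<not> L > 1"
    hence "ln L \<le> 0" using L0 by (cases "L = 0") auto
    thus False using h pos unfolding L_def by linarith
  qed
  have "real k powr B = exp (B * ln (real k))" using k by (simp add: powr_def mult.commute)
  also have "\<dots> \<le> exp (ln L)" using h unfolding L_def by simp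
  also have "\<dots> = L" using L1 by simp
  also have "L < x"
  proof -
    have "1 / gam k < exp x" using g gk by (simp add: exp_minus field_simps)
    hence "ln (1 / gam k) < ln (exp x)" using gk by (intro ln_less_cancel_iff[THEN iffD2]) auto
    thus ?thesis unfolding L_def by simp
  qed
  finally have kx: "real k powr B < x" .
  have "real k = (real k powr B) powr (1/B)" using B by (simp add: powr_powr)
  also have "\<dots> \<le> x powr (1/B)" using kx B by (intro powr_mono2) auto
  finally show ?thesis by simp
qed

lemma lam_bound:
  assumes B: "B > 0" and j1: "\<And>j. j \<ge> j1 \<Longrightarrow> ereal B < lam_ratio lam j \<and> lam j < exp (-1) \<and> j \<ge> 3"
    and j: "j \<ge> 1" and l: "lam j > exp (- x)"
  shows "real j \<le> real j1 + exp (x powr (1/B))"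
proof (cases "j < j1")
  case True thus ?thesis by (simp add: less_imp_le add_increasing2)
next
  case False
  hence jj: "j \<ge> j1" by simp
  note J = j1[OF jj]
  have lpos: "lam j > 0" using l by (metis exp_gt_zero less_trans)
  have lnj: "ln (real j) > 1"
  proof -
    have "exp 1 < (3::real)" using e_less_272 by simp
    also have "\<dots> \<le> real j" using J by simp
    finally show ?thesis by (metis exp_gt_zero less_trans ln_exp ln_less_cancel_iff exp_gt_zero)
  qed
  have lnlnj: "ln (ln (real j)) > 0" using lnj by simp
  have r: "B < ln (ln (1 / lam j)) / ln (ln (real j))" using J lpos unfolding lam_ratio_def by simp
  hence h: "B * ln (ln (real j)) < ln (ln (1 / lam j))" using lnlnj by (simp add: pos_less_divide_eq)
  define L where "L = ln (1 / lam j)"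
  have L1: "L > 1"
  proof -
    have "1 / lam j > exp 1" using J lpos by (simp add: exp_minus field_simps)
    hence "ln (1 / lam j) > ln (exp 1)" using lpos by (intro ln_less_cancel_iff[THEN iffD2]) auto
    thus ?thesis unfolding L_def by simp
  qed
  have "ln (real j) powr B = exp (B * ln (ln (real j)))" using lnj by (simp add: powr_def mult.commute)
  also have "\<dots> < exp (ln L)" using h unfolding L_def by simp
  also have "\<dots> = L" using L1 by simp
  also have "L < x"
  proof -
    have "1 / lam j < exp x" using l lpos by (simp add: exp_minus field_simps)
    hence "ln (1 / lam j) < ln (exp x)" using lpos by (intro ln_less_cancel_iff[THEN iffD2]) auto
    thus ?thesis unfolding L_def by simp
  qed
  finally have kx: "ln (real j) powr B < x" .
  have "ln (real j) = (ln (real j) powr B) powr (1/B)" using B lnj by (simp add: powr_powr)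
  also have "\<dots> \<le> x powr (1/B)" using kx B lnj by (intro powr_mono2) auto
  finally have "ln (real j) \<le> x powr (1/B)" .
  hence "real j \<le> exp (x powr (1/B))" using j by (metis exp_le_cancel_iff exp_ln of_nat_0_less_iff less_le_trans zero_less_one)
  thus ?thesis by simp
qed


lemma suff_bound:
  assumes lim: "lam \<longlonglongrightarrow> 0" and lamc: "lam_ratio lam \<longlonglongrightarrow> \<infinity>"
    and gamc: "filterlim (\<lambda>j. ln (ln (1 / gam j)) / ln (real j)) at_top sequentially"
    and sig: "\<sigma> > 0"
  shows "\<exists>C. \<forall>d eps. 0 < eps \<longrightarrow> eps < 1 \<longrightarrow>
            ln (real (card (Aset d eps))) \<le> C * (1 + ln (1 / eps) powr \<sigma>)"
proof -
  define B where "B = 2 / \<sigma>"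
  have B: "B > 0" using sig unfolding B_def by simp
  obtain j0' where j0': "\<And>j. j \<ge> j0' \<Longrightarrow> B \<le> ln (ln (1 / gam j)) / ln (real j)"
    using gamc unfolding filterlim_at_top eventually_sequentially by blast
  define j0 where "j0 = max j0' 2"
  have j0: "\<And>j. j \<ge> j0 \<Longrightarrow> B \<le> ln (ln (1 / gam j)) / ln (real j)" "j0 \<ge> 2"
    using j0' unfolding j0_def by auto
  have ev: "eventually (\<lambda>j. ereal B < lam_ratio lam j \<and> lam j < exp (-1) \<and> j \<ge> 3) sequentially"
    using lamc lim unfolding tendsto_PInfty
    by (intro eventually_conj order_tendstoD(2)[OF lim]) (auto simp: eventually_sequentially)
  then obtain j1 where j1: "\<And>j. j \<ge> j1 \<Longrightarrow> ereal B < lam_ratio lam j \<and> lam j < exp (-1) \<and> j \<ge> 3"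
    unfolding eventually_sequentially by blast
  define a where "a = real j0 + 1"
  define b where "b = ln (real j1 + 2)"
  have a0: "a \<ge> 0" and b0: "b \<ge> 0" unfolding a_def b_def by auto
  define C where "C = (a+1)*(b+1)*(1 + 2 powr \<sigma>)"
  have "ln (real (card (Aset d eps))) \<le> C * (1 + ln (1 / eps) powr \<sigma>)"
    if eps: "0 < eps" "eps < 1" for d eps
  proof -
    define y where "y = ln (1 / eps)"
    have y0: "y > 0" unfolding y_def using eps by simp
    define x where "x = 2 * y"
    have ex: "exp (- x) = eps\<^sup>2"
    proof -
      have "exp (- y) = eps" unfolding y_def using eps by (simp add: ln_div exp_minus)
      hence "exp (- y) ^ 2 = eps\<^sup>2" by simp
      thus ?thesis unfolding x_def by (simp add: exp_of_nat_mult[symmetric] mult.commute)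
    qed
    define u where "u = x powr (1/B)"
    have u0: "u \<ge> 0" unfolding u_def by simp
    define M where "M = nat \<lceil>real j0 + u\<rceil>"
    define N where "N = nat \<lceil>real j1 + exp u\<rceil>"
    have Mr: "real M \<le> a + u" unfolding M_def a_def using u0 by linarith
    have epos: "exp u > 0" by simp
    have Nr1: "real N \<le> real j1 + 1 + exp u" unfolding N_def using epos by linarith
    have Nr2: "real N \<ge> exp u" unfolding N_def using epos by linarith
    note Nr = Nr1 Nr2
    have eu1: "exp u \<ge> 1" using u0 by simp
    have "real N \<ge> 1" using Nr2 eu1 by linarith
    hence N1: "N \<ge> 1" by simp
    have sub: "Aset d (sqrt (eps\<^sup>2)) \<subseteq> PiE {1..d} (\<lambda>k. if k \<le> M then {1..N} else {1})"
    proof (rule Aset_sub)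
      show "0 \<le> eps\<^sup>2" "eps\<^sup>2 < 1" using eps by (auto simp: power_less_one_iff)
    next
      fix k assume "1 \<le> k" "k \<le> d" "eps\<^sup>2 < gam k"
      hence "real k \<le> real j0 + u" using gam_bound[OF B j0(1) j0(2), where k=k and x=x] ex unfolding u_def by auto
      thus "k \<le> M" unfolding M_def by linarith
    next
      fix j assume "1 \<le> j" "eps\<^sup>2 < lam j"
      hence "real j \<le> real j1 + exp u" using lam_bound[OF B j1, where j=j and x=x] ex unfolding u_def by auto
      thus "j \<le> N" unfolding N_def by linarith
    qed
    have card1: "card (Aset d eps) \<ge> 1" using card_Aset_ge1[OF lim eps] .
    have "card (Aset d eps) \<le> N ^ M"
    proof -
      have "sqrt (eps\<^sup>2) = eps" using eps by simp
      hence "card (Aset d eps) \<le> card (PiE {1..d} (\<lambda>k. if k \<le> M then {1..N} else {1::nat}))"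
        using sub by (intro card_mono finite_PiE) auto
      thus ?thesis using card_bound_PiE[OF N1, of d M] by linarith
    qed
    hence "real (card (Aset d eps)) \<le> real N ^ M" by (metis of_nat_le_iff of_nat_power)
    hence "ln (real (card (Aset d eps))) \<le> ln (real N ^ M)" using card1 by (intro ln_mono) auto
    also have "\<dots> = real M * ln (real N)" using N1 by (simp add: ln_realpow)
    also have "\<dots> \<le> (a + u) * (b + u)"
    proof (rule mult_mono)
      have "real N \<le> (real j1 + 2) * exp u"
      proof -
        have "real j1 * 1 \<le> real j1 * exp u" using eu1 by (intro mult_left_mono) auto
        moreover have "(real j1 + 2) * exp u = real j1 * exp u + 2 * exp u" by (simp add: distrib_right)
        ultimately show ?thesis using Nr1 eu1 by linarith
      qed
      hence "ln (real N) \<le> ln ((real j1 + 2) * exp u)" using N1 by (intro ln_mono) auto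
      also have "\<dots> = b + u" unfolding b_def by (simp add: ln_mult)
      finally show "ln (real N) \<le> b + u" .
      show "0 \<le> a + u" using a0 u0 by simp
      show "0 \<le> ln (real N)" using N1 by simp
    qed (use Mr in auto)
    also have "\<dots> \<le> (a+1)*(b+1)*(1+u*u)" using prodbound a0 b0 u0 by blast
    also have "u * u = 2 powr \<sigma> * y powr \<sigma>"
    proof -
      have "u * u = x powr (2/B)" unfolding u_def by (simp add: powr_add[symmetric])
      also have "2/B = \<sigma>" unfolding B_def using sig by simp
      also have "x powr \<sigma> = 2 powr \<sigma> * y powr \<sigma>" unfolding x_def using y0 by (simp add: powr_mult)
      finally show ?thesis .
    qed
    also have "(a+1)*(b+1)*(1 + 2 powr \<sigma> * y powr \<sigma>) \<le> C * (1 + y powr \<sigma>)"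
    proof -
      have "1 + 2 powr \<sigma> * y powr \<sigma> \<le> (1 + 2 powr \<sigma>) * (1 + y powr \<sigma>)"
        by (simp add: algebra_simps)
      thus ?thesis unfolding C_def using a0 b0 by (simp add: mult_left_mono mult.assoc)
    qed
    finally show ?thesis unfolding y_def .
  qed
  thus ?thesis by blast
qed


lemma sufficiency:
  assumes lim: "lam \<longlonglongrightarrow> 0" and lamc: "lam_ratio lam \<longlonglongrightarrow> \<infinity>"
    and gamc: "filterlim (\<lambda>j. ln (ln (1 / gam j)) / ln (real j)) at_top sequentially"
    and s: "s > 0" and t: "t > 0"
  shows "EXP_WT lam gam s t"
  unfolding EXP_WT_def
proof (intro allI impI)
  fix \<eta> :: real assume eta: "\<eta> > 0"
  obtain C where C: "\<And>d eps. 0 < eps \<Longrightarrow> eps < 1 \<Longrightarrow>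
            ln (real (card (Aset d eps))) \<le> C * (1 + ln (1 / eps) powr (s/2))"
    using suff_bound[OF lim lamc gamc, of "s/2"] s by auto
  define C' where "C' = max C 1"
  have C'1: "C' \<ge> 1" unfolding C'_def by simp
  have C': "ln (real (card (Aset d eps))) \<le> C' * (1 + ln (1 / eps) powr (s/2))"
    if "0 < eps" "eps < 1" for d eps
  proof -
    have "C * (1 + ln (1 / eps) powr (s/2)) \<le> C' * (1 + ln (1 / eps) powr (s/2))"
      unfolding C'_def by (intro mult_right_mono) auto
    thus ?thesis using C[OF that, of d] by linarith
  qed
  define T where "T = (2 * C' / \<eta>)\<^sup>2 + 1"
  have T1: "T \<ge> 1" unfolding T_def by simp
  define R where "R = 2 * max (T powr (1/t)) (exp (T powr (1/s)))"
  have "\<bar>ln (real (info_compl lam gam d eps)) / (real d powr t + ln (1 / eps) powr s)\<bar> < \<eta>"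
    if d: "d \<ge> 1" and eps: "0 < eps" "eps < 1" and R: "real d + 1 / eps > R" for d eps
  proof -
    define y where "y = ln (1 / eps)"
    have y0: "y > 0" unfolding y_def using eps by simp
    define D where "D = real d powr t + y powr s"
    have dt: "real d powr t \<ge> 1" using d t by (simp add: ge_one_powr_ge_zero)
    have D1: "D \<ge> 1" unfolding D_def using dt by (smt (verit) powr_ge_zero)
    have DT: "D > T"
    proof (cases "real d > R / 2")
      case True
      hence "real d > T powr (1/t)" unfolding R_def by linarith
      hence "real d powr t > (T powr (1/t)) powr t" using t T1 by (intro powr_less_mono2) auto
      also have "(T powr (1/t)) powr t = T" using t T1 by (simp add: powr_powr)
      finally show ?thesis unfolding D_def by (smt (verit) powr_ge_zero)
    next
      case False
      hence "1 / eps > exp (T powr (1/s))" using R unfolding R_def by linarith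
      hence "ln (1 / eps) > ln (exp (T powr (1/s)))" using eps by (intro ln_less_cancel_iff[THEN iffD2]) auto
      hence "y > T powr (1/s)" unfolding y_def by simp
      hence "y powr s > (T powr (1/s)) powr s" using s T1 by (intro powr_less_mono2) auto
      also have "(T powr (1/s)) powr s = T" using s T1 by (simp add: powr_powr)
      finally show ?thesis unfolding D_def using dt by linarith
    qed
    define q where "q = sqrt D"
    have q1: "q \<ge> 1" unfolding q_def using D1 by simp
    have Dq: "D = q * q" unfolding q_def using D1 by simp
    have ys: "y powr (s/2) \<le> q"
    proof -
      have "y powr (s/2) = sqrt (y powr s)" using y0 by (simp add: powr_half_sqrt_powr)
      also have "\<dots> \<le> q" unfolding q_def D_def by (intro real_sqrt_le_mono) simp
      finally show ?thesis .
    qed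
    have n1: "card (Aset d eps) \<ge> 1" using card_Aset_ge1[OF lim eps] .
    have lnn0: "ln (real (card (Aset d eps))) \<ge> 0" using n1 by simp
    have "ln (real (card (Aset d eps))) \<le> C' * (1 + q)"
      using C'[OF eps, of d] ys C'1 unfolding y_def by (smt (verit) mult_left_mono)
    also have "\<dots> \<le> 2 * C' * q" using q1 C'1 by (simp add: algebra_simps)
    finally have lnq: "ln (real (card (Aset d eps))) \<le> 2 * C' * q" .
    have qgt: "q > 2 * C' / \<eta>"
    proof -
      have "(2 * C' / \<eta>)\<^sup>2 < D" using DT unfolding T_def by linarith
      hence "sqrt ((2 * C' / \<eta>)\<^sup>2) < q" unfolding q_def by (intro real_sqrt_less_mono)
      thus ?thesis using C'1 eta by simp
    qed
    have "ln (real (card (Aset d eps))) / D \<le> 2 * C' * q / (q * q)"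
      unfolding Dq using lnq q1 by (intro divide_right_mono) auto
    also have "\<dots> = 2 * C' / q" using q1 by simp
    also have "\<dots> < \<eta>" using qgt q1 eta by (simp add: divide_less_eq mult.commute pos_divide_less_eq)
    finally have "ln (real (card (Aset d eps))) / D < \<eta>" .
    moreover have "ln (real (card (Aset d eps))) / D \<ge> 0" using lnn0 D1 by simp
    ultimately show ?thesis unfolding info_Aset D_def y_def by simp
  qed
  thus "\<exists>R. \<forall>d eps. 1 \<le> d \<longrightarrow> 0 < eps \<longrightarrow> eps < 1 \<longrightarrow> R < real d + 1 / eps \<longrightarrow>
        \<bar>ln (real (info_compl lam gam d eps)) / (real d powr t + ln (1 / eps) powr s)\<bar> < \<eta>" by blast
qed


lemma lower1:
  assumes lim: "lam \<longlonglongrightarrow> 0" and j: "j \<ge> 1" "lam j > 0"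
  shows "j \<le> card (Aset 1 (sqrt (gam 1 * lam j / 2)))"
proof -
  define eps where "eps = sqrt (gam 1 * lam j / 2)"
  have g1: "0 < gam 1" "gam 1 \<le> 1" using gam_pos[of 1] gam1 by auto
  have lj1: "lam j \<le> 1" using lam_le1[OF j(1)] .
  have z: "0 < gam 1 * lam j" "gam 1 * lam j \<le> 1" using g1 j lj1 by (auto intro: mult_le_one)
  have e2: "eps\<^sup>2 = gam 1 * lam j / 2" unfolding eps_def using z by simp
  have epos: "0 < eps" "eps < 1" unfolding eps_def using z by auto
  have sub: "PiE {1..1} (\<lambda>_. {1..j}) \<subseteq> Aset 1 eps"
  proof
    fix i assume i: "i \<in> PiE {1..1::nat} (\<lambda>_. {1..j})"
    have i1: "1 \<le> i 1" "i 1 \<le> j" using i by (auto simp: PiE_iff)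
    have "eps\<^sup>2 < wlam lam gam 1 (i 1)"
    proof (cases "i 1 = 1")
      case True thus ?thesis using e2 z unfolding wlam_def by simp
    next
      case False
      have "lam j \<le> lam (i 1)" using lam_mono i1 by auto
      hence "gam 1 * lam j \<le> gam 1 * lam (i 1)" using g1 by (simp add: mult_left_mono)
      thus ?thesis using False e2 z unfolding wlam_def by simp
    qed
    moreover have "i \<in> {1..1} \<rightarrow>\<^sub>E {1..}" using i by (auto simp: PiE_iff)
    ultimately show "i \<in> Aset 1 eps" unfolding Aset_def by simp
  qed
  have "card (PiE {1..1::nat} (\<lambda>_. {1..j})) = j" by (simp add: card_PiE)
  thus ?thesis using card_mono[OF Aset_finite[OF lim epos] sub] unfolding eps_def by simp
qed

lemma lower2:
  assumes lim: "lam \<longlonglongrightarrow> 0" and j: "j \<ge> 1" and l2: "lam 2 > 0"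
  shows "2 ^ j \<le> card (Aset j (sqrt ((gam j * lam 2) ^ j / 2)))"
proof -
  define a where "a = gam j * lam 2"
  define eps where "eps = sqrt (a ^ j / 2)"
  have gj: "0 < gam j" "gam j \<le> 1" using gam_pos[OF j] gam_le1[OF j] by auto
  have l21: "lam 2 \<le> 1" using lam_le1[of 2] by simp
  have a: "0 < a" "a \<le> 1" unfolding a_def using gj l2 l21 by (auto intro: mult_le_one)
  have aj: "0 < a ^ j" "a ^ j \<le> 1" using a by (auto intro: power_le_one)
  have e2: "eps\<^sup>2 = a ^ j / 2" unfolding eps_def using aj by simp
  have epos: "0 < eps" "eps < 1" unfolding eps_def using aj by auto
  have sub: "PiE {1..j} (\<lambda>_. {1,2}) \<subseteq> Aset j eps"
  proof
    fix i assume i: "i \<in> PiE {1..j} (\<lambda>_. {1::nat,2})"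
    have ge: "a \<le> wlam lam gam k (i k)" if k: "k \<in> {1..j}" for k
    proof -
      have "i k = 1 \<or> i k = 2" using i k by (auto simp: PiE_iff)
      moreover have "gam j * lam 2 \<le> gam k * lam 2" using gam_mono[of k j] k l2 by (intro mult_right_mono) auto
      ultimately show ?thesis using a unfolding wlam_def a_def by auto
    qed
    have "(\<Prod>k\<in>{1..j}. a) \<le> (\<Prod>k\<in>{1..j}. wlam lam gam k (i k))"
      using ge a by (intro prod_mono) auto
    hence "a ^ j \<le> (\<Prod>k\<in>{1..j}. wlam lam gam k (i k))" by simp
    hence "eps\<^sup>2 < (\<Prod>k\<in>{1..j}. wlam lam gam k (i k))" using e2 aj by linarith
    moreover have "i \<in> {1..j} \<rightarrow>\<^sub>E {1..}" using i by (auto simp: PiE_iff)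
    ultimately show "i \<in> Aset j eps" unfolding Aset_def by simp
  qed
  have "card (PiE {1..j} (\<lambda>_. {1::nat,2})) = 2 ^ j" by (simp add: card_PiE numeral_2_eq_2)
  thus ?thesis using card_mono[OF Aset_finite[OF lim epos] sub] unfolding eps_def a_def by simp
qed

lemma EXP_WT_bound:
  assumes "EXP_WT lam gam s t"
  shows "\<exists>R. \<forall>d eps. 1 \<le> d \<longrightarrow> 0 < eps \<longrightarrow> eps < 1 \<longrightarrow> R < real d + 1 / eps \<longrightarrow>
            ln (real (card (Aset d eps))) < real d powr t + ln (1 / eps) powr s"
proof -
  obtain R where R: "\<And>d eps. 1 \<le> d \<Longrightarrow> 0 < eps \<Longrightarrow> eps < 1 \<Longrightarrow> R < real d + 1 / eps \<Longrightarrow>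
        \<bar>ln (real (info_compl lam gam d eps)) / (real d powr t + ln (1 / eps) powr s)\<bar> < 1"
    using assms unfolding EXP_WT_def by (meson zero_less_one)
  have "ln (real (card (Aset d eps))) < real d powr t + ln (1 / eps) powr s"
    if "1 \<le> d" "0 < eps" "eps < 1" "R < real d + 1 / eps" for d eps
  proof -
    have D: "real d powr t + ln (1 / eps) powr s > 0" using that
      by (smt (verit) of_nat_0_less_iff powr_gt_zero powr_ge_zero less_le_trans zero_less_one)
    have "\<bar>ln (real (card (Aset d eps))) / (real d powr t + ln (1 / eps) powr s)\<bar> < 1"
      using R[OF that] unfolding info_Aset .
    hence "ln (real (card (Aset d eps))) / (real d powr t + ln (1 / eps) powr s) < 1" by linarith
    thus ?thesis using D by (simp add: divide_less_eq)
  qed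
  thus ?thesis by blast
qed


lemma nec_lam:
  assumes lim: "lam \<longlonglongrightarrow> 0" and uwt: "\<And>s. s > 0 \<Longrightarrow> EXP_WT lam gam s 1"
  shows "lam_ratio lam \<longlonglongrightarrow> \<infinity>"
proof (rule ccontr)
  assume "\<not> ?thesis"
  then obtain r where "\<not> eventually (\<lambda>j. ereal r < lam_ratio lam j) sequentially"
    unfolding tendsto_PInfty by blast
  hence fr0: "\<And>N. \<exists>j\<ge>N. lam_ratio lam j \<le> ereal r"
    unfolding eventually_sequentially by (meson not_less)
  define B where "B = max r 1"
  have B1: "B \<ge> 1" unfolding B_def by simp
  have fr: "\<exists>j\<ge>N. lam_ratio lam j \<le> ereal B" for N
    using fr0[of N] unfolding B_def by (meson ereal_less_eq(3) max.cobounded1 order_trans)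
  define s where "s = 1 / (2 * B)"
  have s0: "s > 0" unfolding s_def using B1 by simp
  obtain R where R: "\<And>d eps. 1 \<le> d \<Longrightarrow> 0 < eps \<Longrightarrow> eps < 1 \<Longrightarrow> R < real d + 1 / eps \<Longrightarrow>
            ln (real (card (Aset d eps))) < real d powr 1 + ln (1 / eps) powr s"
    using EXP_WT_bound[OF uwt[OF s0]] by blast
  define c0 where "c0 = ln 2 + ln (1 / gam 1)"
  have g1: "0 < gam 1" "gam 1 \<le> 1" using gam_pos[of 1] gam1 by auto
  have c00: "c0 \<ge> 0" unfolding c0_def using g1 by simp
  define \<delta> where "\<delta> = min (exp (-1)) (1 / (\<bar>R\<bar> + 1)\<^sup>2)"
  have "\<delta> > 0" unfolding \<delta>_def by simp
  hence "eventually (\<lambda>j. lam j < \<delta>) sequentially" using lim by (intro order_tendstoD(2)) auto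
  then obtain N1 where N1: "\<And>j. j \<ge> N1 \<Longrightarrow> lam j < \<delta>" unfolding eventually_sequentially by blast
  define N2 where "N2 = nat \<lceil>exp (max 3 (c0 powr (1/B)))\<rceil>"
  obtain j where j: "j \<ge> max (max N1 N2) 1" "lam_ratio lam j \<le> ereal B" using fr by blast
  have j1: "j \<ge> 1" using j by simp
  have ld: "lam j < exp (-1)" "lam j < 1 / (\<bar>R\<bar> + 1)\<^sup>2" using N1[of j] j unfolding \<delta>_def by auto
  have "real j \<ge> exp (max 3 (c0 powr (1/B)))" using j(1) unfolding N2_def by linarith
  hence lnj: "ln (real j) \<ge> max 3 (c0 powr (1/B))"
    using j1 by (metis exp_gt_zero exp_le_cancel_iff exp_ln less_le_trans of_nat_0_less_iff zero_less_one)
  have lam0: "lam j \<noteq> 0" using j(2) unfolding lam_ratio_def by auto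
  hence lpos: "lam j > 0" using lam_nonneg[OF j1] by simp
  have lnlnj: "ln (ln (real j)) > 0" using lnj by simp
  have "ln (ln (1 / lam j)) / ln (ln (real j)) \<le> B" using j(2) lam0 unfolding lam_ratio_def by simp
  hence h: "ln (ln (1 / lam j)) \<le> B * ln (ln (real j))" using lnlnj by (simp add: divide_le_eq)
  define L where "L = ln (1 / lam j)"
  have L1: "L > 1"
  proof -
    have "1 / lam j > exp 1" using ld lpos by (simp add: exp_minus field_simps)
    hence "ln (1 / lam j) > ln (exp 1)" using lpos by (intro ln_less_cancel_iff[THEN iffD2]) auto
    thus ?thesis unfolding L_def by simp
  qed
  have "L = exp (ln L)" using L1 by simp
  also have "\<dots> \<le> exp (B * ln (ln (real j)))" using h unfolding L_def by simp
  also have "\<dots> = ln (real j) powr B" using lnj by (simp add: powr_def mult.commute)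
  finally have LB: "L \<le> ln (real j) powr B" .
  have c0B: "c0 \<le> ln (real j) powr B"
  proof -
    have "c0 = (c0 powr (1/B)) powr B" using B1 c00 by (simp add: powr_powr)
    also have "\<dots> \<le> ln (real j) powr B" using lnj B1 by (intro powr_mono2) auto
    finally show ?thesis .
  qed
  define eps where "eps = sqrt (gam 1 * lam j / 2)"
  have z: "0 < gam 1 * lam j" "gam 1 * lam j \<le> lam j" using g1 lpos by (auto simp: mult_left_le_one_le)
  have e2: "eps\<^sup>2 = gam 1 * lam j / 2" unfolding eps_def using z by simp
  have lj1: "lam j \<le> 1" using lam_le1[OF j1] .
  have epos: "0 < eps" "eps < 1" unfolding eps_def using z lj1 by auto
  have cardj: "j \<le> card (Aset 1 eps)" using lower1[OF lim j1 lpos] unfolding eps_def .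
  have Req: "R < real 1 + 1 / eps"
  proof -
    have "eps\<^sup>2 < (1 / (\<bar>R\<bar> + 1))\<^sup>2" using e2 z ld(2) by (simp add: power_divide)
    hence "eps < 1 / (\<bar>R\<bar> + 1)" using epos by (smt (verit) power_mono divide_pos_pos)
    hence "1 / eps > \<bar>R\<bar> + 1" using epos by (simp add: field_simps)
    thus ?thesis by linarith
  qed
  have main: "ln (real (card (Aset 1 eps))) < real 1 powr 1 + ln (1 / eps) powr s"
    using R[OF _ epos Req] by simp
  have Leps: "ln (1 / eps) = (c0 + L) / 2"
  proof -
    have "ln (1 / eps) = - ln eps" using epos by (simp add: ln_div)
    also have "ln eps = ln (gam 1 * lam j / 2) / 2" unfolding eps_def using z by (simp add: ln_sqrt)
    also have "ln (gam 1 * lam j / 2) = ln (gam 1) + ln (lam j) - ln 2" using g1 lpos by (simp add: ln_div ln_mult)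
    finally have "ln (1 / eps) = - ((ln (gam 1) + ln (lam j) - ln 2) / 2)" .
    moreover have "c0 = ln 2 - ln (gam 1)" unfolding c0_def using g1 by (simp add: ln_div)
    moreover have "L = - ln (lam j)" unfolding L_def using lpos by (simp add: ln_div)
    ultimately show ?thesis by (simp add: field_simps)
  qed
  have Lle: "ln (1 / eps) \<le> ln (real j) powr B" using Leps[unfolded add_divide_distrib] LB c0B by linarith
  have "ln (1 / eps) powr s \<le> (ln (real j) powr B) powr s" using Lle epos s0 by (intro powr_mono2) auto
  also have "\<dots> = sqrt (ln (real j))" unfolding s_def using B1 lnj by (simp add: powr_powr powr_half_sqrt)
  finally have ps: "ln (1 / eps) powr s \<le> sqrt (ln (real j))" .
  have "ln (real j) \<le> ln (real (card (Aset 1 eps)))" using cardj j1 by (intro ln_mono) auto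
  hence lt: "ln (real j) < 1 + sqrt (ln (real j))" using main ps by simp
  define v where "v = sqrt (ln (real j))"
  have v2: "v * v = ln (real j)" unfolding v_def using lnj by simp
  have "v \<ge> sqrt 3" unfolding v_def using lnj by simp
  moreover have "sqrt 3 > (1.7::real)" by (rule real_less_rsqrt) (simp add: power2_eq_square)
  ultimately have v17: "v > 1.7" by linarith
  have "v * v < 1 + v" using lt v2 unfolding v_def by simp
  moreover have "v * v \<ge> 1.7 * v" using v17 by (intro mult_right_mono) auto
  ultimately show False using v17 by linarith
qed


lemma nec_gam:
  assumes lim: "lam \<longlonglongrightarrow> 0" and l2: "lam 2 > 0"
    and uwt: "\<And>s t. s > 0 \<Longrightarrow> t > 0 \<Longrightarrow> EXP_WT lam gam s t"
  shows "filterlim (\<lambda>j. ln (ln (1 / gam j)) / ln (real j)) at_top sequentially"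
proof (rule ccontr)
  assume "\<not> ?thesis"
  then obtain Z where "\<not> eventually (\<lambda>j. Z \<le> ln (ln (1 / gam j)) / ln (real j)) sequentially"
    unfolding filterlim_at_top by blast
  hence fr0: "\<And>N. \<exists>j\<ge>N. ln (ln (1 / gam j)) / ln (real j) < Z"
    unfolding eventually_sequentially by (meson not_less)
  define B where "B = max Z 1"
  have B1: "B \<ge> 1" unfolding B_def by simp
  have fr: "\<exists>j\<ge>N. ln (ln (1 / gam j)) / ln (real j) < B" for N
    using fr0[of N] unfolding B_def by (meson less_le_trans max.cobounded1)
  define s where "s = 1 / (2 * (B + 1))"
  have s0: "s > 0" unfolding s_def using B1 by simp
  obtain R where R: "\<And>d eps. 1 \<le> d \<Longrightarrow> 0 < eps \<Longrightarrow> eps < 1 \<Longrightarrow> R < real d + 1 / eps \<Longrightarrow>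
            ln (real (card (Aset d eps))) < real d powr (1/2) + ln (1 / eps) powr s"
    using EXP_WT_bound[OF uwt[OF s0, of "1/2"]] by auto
  define c2 where "c2 = ln (1 / lam 2)"
  have l21: "lam 2 \<le> 1" using lam_le1[of 2] by simp
  have c20: "c2 \<ge> 0" unfolding c2_def using l2 l21 by simp
  define K where "K = (2 + c2) / 2"
  have K0: "K > 0" unfolding K_def using c20 by simp
  define W where "W = (1 + K powr s) / ln 2"
  have W0: "W \<ge> 0" unfolding W_def by simp
  define N0 where "N0 = max (max (nat \<lceil>R\<rceil> + 1) (nat \<lceil>W\<^sup>2\<rceil> + 1)) 2"
  obtain j where j: "j \<ge> N0" "ln (ln (1 / gam j)) / ln (real j) < B" using fr by blast
  have j2: "j \<ge> 2" and jR: "real j > R" and jW: "real j > W\<^sup>2" using j(1) unfolding N0_def by linarith+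
  have j1: "j \<ge> 1" using j2 by simp
  have lnj: "ln (real j) > 0" using j2 by simp
  have h: "ln (ln (1 / gam j)) < B * ln (real j)" using j(2) lnj by (simp add: divide_less_eq)
  have gj: "0 < gam j" "gam j \<le> 1" using gam_pos[OF j1] gam_le1[OF j1] by auto
  define G where "G = ln (1 / gam j)"
  have G0: "G \<ge> 0" unfolding G_def using gj by simp
  have GB: "G < real j powr B"
  proof (cases "G = 0")
    case True thus ?thesis using j2 by simp
  next
    case False
    hence "G = exp (ln G)" using G0 by simp
    also have "\<dots> < exp (B * ln (real j))" using h unfolding G_def by simp
    also have "\<dots> = real j powr B" using j2 by (simp add: powr_def mult.commute)
    finally show ?thesis .
  qed
  define a where "a = gam j * lam 2"
  define eps where "eps = sqrt (a ^ j / 2)"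
  have a: "0 < a" "a \<le> 1" unfolding a_def using gj l2 l21 by (auto intro: mult_le_one)
  have aj: "0 < a ^ j" "a ^ j \<le> 1" using a by (auto intro: power_le_one)
  have epos: "0 < eps" "eps < 1" unfolding eps_def using aj by auto
  have card2: "2 ^ j \<le> card (Aset j eps)" using lower2[OF lim j1 l2] unfolding eps_def a_def .
  have Req: "R < real j + 1 / eps" using jR epos by (smt (verit) divide_pos_pos)
  have main: "ln (real (card (Aset j eps))) < real j powr (1/2) + ln (1 / eps) powr s"
    using R[OF j1 epos Req] .
  have Leps: "2 * ln (1 / eps) = ln 2 + real j * (G + c2)"
  proof -
    have "ln (1 / eps) = - ln eps" using epos by (simp add: ln_div)
    also have "ln eps = ln (a ^ j / 2) / 2" unfolding eps_def using aj by (simp add: ln_sqrt)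
    also have "ln (a ^ j / 2) = real j * ln a - ln 2" using a by (simp add: ln_div ln_realpow)
    also have "ln a = ln (gam j) + ln (lam 2)" unfolding a_def using gj l2 by (simp add: ln_mult)
    finally have X: "ln (1 / eps) = - ((real j * (ln (gam j) + ln (lam 2)) - ln 2) / 2)" .
    have "2 * ln (1 / eps) = - (real j * (ln (gam j) + ln (lam 2)) - ln 2)" unfolding X by (simp add: field_simps)
    moreover have "G = - ln (gam j)" unfolding G_def using gj by (simp add: ln_div)
    moreover have "c2 = - ln (lam 2)" unfolding c2_def using l2 by (simp add: ln_div)
    ultimately show ?thesis by (simp add: algebra_simps)
  qed
  define P where "P = real j powr (B + 1)"
  have Pj: "P = real j * real j powr B" unfolding P_def using j2 by (simp add: powr_add)
  have jP: "real j \<le> P"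
  proof -
    have "real j powr B \<ge> 1" using j2 B1 by (simp add: ge_one_powr_ge_zero)
    hence "real j * 1 \<le> real j * real j powr B" by (intro mult_left_mono) auto
    thus ?thesis unfolding Pj by simp
  qed
  have P1: "P \<ge> 1" using jP j2 by linarith
  have "real j * G \<le> P" unfolding Pj using GB by (intro mult_left_mono) auto
  moreover have "real j * c2 \<le> c2 * P" using mult_left_mono[OF jP c20] by (simp add: mult.commute)
  moreover have "ln (2::real) \<le> 1" using ln_2_less_1 by simp
  ultimately have "2 * ln (1 / eps) \<le> (2 + c2) * P" using Leps P1 by (simp add: algebra_simps)
  hence LK: "ln (1 / eps) \<le> K * P" unfolding K_def by simp
  have "ln (1 / eps) powr s \<le> (K * P) powr s" using LK epos s0 by (intro powr_mono2) auto
  also have "\<dots> = K powr s * P powr s" using K0 P1 by (simp add: powr_mult)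
  also have "P powr s = sqrt (real j)"
  proof -
    have e: "(B + 1) * s = 1/2" unfolding s_def using B1 by simp
    show ?thesis unfolding P_def powr_powr e using j2 by (simp add: powr_half_sqrt)
  qed
  finally have ps: "ln (1 / eps) powr s \<le> K powr s * sqrt (real j)" .
  have "real j * ln 2 = ln (2 ^ j)" by (simp add: ln_realpow)
  also have "\<dots> \<le> ln (real (card (Aset j eps)))"
    using card2 by (intro ln_mono) (auto simp: of_nat_power[symmetric] simp del: of_nat_power)
  finally have lb: "real j * ln 2 < sqrt (real j) * (1 + K powr s)"
    using main ps j2 by (simp add: powr_half_sqrt algebra_simps)
  define w where "w = sqrt (real j)"
  have w: "w * w = real j" "w > 0" unfolding w_def using j2 by auto
  have e1: "w * (w * ln 2) = real j * ln 2" using w(1) by (metis mult.assoc)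
  have e2: "w * (1 + K powr s) = sqrt (real j) * (1 + K powr s)" unfolding w_def ..
  have "w * (w * ln 2) < w * (1 + K powr s)" unfolding e1 e2 using lb .
  hence "w * ln 2 < 1 + K powr s" using w(2) by simp
  hence wW: "w < W" unfolding W_def by (simp add: pos_less_divide_eq)
  have "W\<^sup>2 < w * w" using jW w by simp
  hence "W < w" using W0 w(2) by (metis power2_eq_square mult_strict_mono' not_less mult_mono le_less_trans order.strict_iff_not)
  thus False using wW by simp
qed

end

theorem theorem2:
  fixes lam gam :: "nat \<Rightarrow> real"
  assumes lam1: "lam 1 = 1"
    and lam2: "lam 2 > 0"
    and lam_nonneg: "\<And>j. j \<ge> 1 \<Longrightarrow> lam j \<ge> 0"
    and lam_mono: "\<And>i j. 1 \<le> i \<Longrightarrow> i \<le> j \<Longrightarrow> lam j \<le> lam i"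
    and lam_lim: "lam \<longlonglongrightarrow> 0"
    and gam1: "gam 1 \<le> 1"
    and gam_pos: "\<And>j. j \<ge> 1 \<Longrightarrow> gam j > 0"
    and gam_mono: "\<And>i j. 1 \<le> i \<Longrightarrow> i \<le> j \<Longrightarrow> gam j \<le> gam i"
  shows "EXP_UWT lam gam \<longleftrightarrow>
           (lam_ratio lam \<longlonglongrightarrow> \<infinity>) \<and>
           filterlim (\<lambda>j. ln (ln (1 / gam j)) / ln (real j)) at_top sequentially"
proof -
  interpret setting lam gam
    using lam1 lam_nonneg lam_mono gam1 gam_pos gam_mono by unfold_locales auto
  show ?thesis
  proof
    assume u: "EXP_UWT lam gam"
    hence uwt: "\<And>s t. s > 0 \<Longrightarrow> t > 0 \<Longrightarrow> EXP_WT lam gam s t" unfolding EXP_UWT_def by blast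
    show "(lam_ratio lam \<longlonglongrightarrow> \<infinity>) \<and>
           filterlim (\<lambda>j. ln (ln (1 / gam j)) / ln (real j)) at_top sequentially"
      using nec_lam[OF lam_lim] nec_gam[OF lam_lim lam2] uwt by auto
  next
    assume "(lam_ratio lam \<longlonglongrightarrow> \<infinity>) \<and>
           filterlim (\<lambda>j. ln (ln (1 / gam j)) / ln (real j)) at_top sequentially"
    thus "EXP_UWT lam gam" unfolding EXP_UWT_def using sufficiency[OF lam_lim] by blast
  qed
qed

end
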